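(* Let $K$ be a field and let $M_1,\dots,M_r$ be Galois extensions of $K$ inside a common algebraic closure such that $M_i\not\subseteq M_1\cdots M_{i-1}$ for every $i=1,\dots,r$. Then there exists $\sigma\in\mathrm{Gal}(M_1\cdots M_r/K)$ such that $\sigma|_{M_i}\neq1$ for every $i$. *)

theory Defs
  imports "HOL-Computational_Algebra.Polynomial"
begin

text \<open>Subfields of an ambient field type 'a (playing the role of the common algebraic closure).\<close>
definition subfield :: "'a::field set \<Rightarrow> bool" where
  "subfield F \<longleftrightarrow> 0 \<in> F \<and> 1 \<in> F \<and> (\<forall>x\<in>F. \<forall>y\<in>F. x + y \<in> F \<and> x * y \<in> F)
     \<and> (\<forall>x\<in>F. - x \<in> F) \<and> (\<forall>x\<in>F. x \<noteq> 0 \<longrightarrow> inverse x \<in> F)"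

definition poly_over :: "'a::field set \<Rightarrow> 'a poly \<Rightarrow> bool" where
  "poly_over K p \<longleftrightarrow> set (coeffs p) \<subseteq> K"

definition algebraic_over :: "'a::field set \<Rightarrow> 'a \<Rightarrow> bool" where
  "algebraic_over K x \<longleftrightarrow> (\<exists>p. p \<noteq> 0 \<and> poly_over K p \<and> poly p x = 0)"

definition irreducible_over :: "'a::field set \<Rightarrow> 'a poly \<Rightarrow> bool" where
  "irreducible_over K p \<longleftrightarrow> poly_over K p \<and> degree p \<ge> 1 \<and>
     (\<forall>q s. poly_over K q \<and> poly_over K s \<and> p = q * s \<longrightarrow> degree q = 0 \<or> degree s = 0)"

definition splits_in :: "'a::field set \<Rightarrow> 'a poly \<Rightarrow> bool" where
  "splits_in M p \<longleftrightarrow> (\<exists>c rs. set rs \<subseteq> M \<and> p = smult c (\<Prod>r\<leftarrow>rs. [:- r, 1:]))"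

text \<open>Normal: the minimal polynomial over K (= any irreducible K-polynomial having x as
  a root) of every element of M splits in M.  Separable: that polynomial is separable
  (coprime to its derivative).\<close>
definition normal_ext :: "'a::field set \<Rightarrow> 'a set \<Rightarrow> bool" where
  "normal_ext K M \<longleftrightarrow> (\<forall>x\<in>M. \<forall>p. irreducible_over K p \<and> poly p x = 0 \<longrightarrow> splits_in M p)"

definition separable_ext :: "'a::field set \<Rightarrow> 'a set \<Rightarrow> bool" where
  "separable_ext K M \<longleftrightarrow> (\<forall>x\<in>M. \<forall>p. irreducible_over K p \<and> poly p x = 0 \<longrightarrow> coprime p (pderiv p))"

definition galois_ext :: "'a::field set \<Rightarrow> 'a set \<Rightarrow> bool" where
  "galois_ext K M \<longleftrightarrow> subfield K \<and> subfield M \<and> K \<subseteq> M \<and>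
     (\<forall>x\<in>M. algebraic_over K x) \<and> normal_ext K M \<and> separable_ext K M"

definition algebraic_closure_of :: "'a::field set \<Rightarrow> bool" where
  "algebraic_closure_of K \<longleftrightarrow> subfield K \<and> (\<forall>x. algebraic_over K x) \<and>
     (\<forall>p::'a poly. degree p \<ge> 1 \<longrightarrow> (\<exists>x. poly p x = 0))"

definition compositum :: "'a::field set \<Rightarrow> 'a set set \<Rightarrow> 'a set" where
  "compositum K \<M> = \<Inter>{F. subfield F \<and> K \<subseteq> F \<and> \<Union>\<M> \<subseteq> F}"

definition gal_aut :: "'a::field set \<Rightarrow> 'a set \<Rightarrow> ('a \<Rightarrow> 'a) \<Rightarrow> bool" where
  "gal_aut K L \<sigma> \<longleftrightarrow> bij_betw \<sigma> L L \<and>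
     (\<forall>x\<in>L. \<forall>y\<in>L. \<sigma> (x + y) = \<sigma> x + \<sigma> y \<and> \<sigma> (x * y) = \<sigma> x * \<sigma> y) \<and>
     (\<forall>k\<in>K. \<sigma> k = k)"

end

theory Submission
  imports Defs
begin


definition ring_closed :: "'a::field set \<Rightarrow> bool" where
  "ring_closed S \<longleftrightarrow> 0 \<in> S \<and> 1 \<in> S \<and> (\<forall>x\<in>S. \<forall>y\<in>S. x + y \<in> S \<and> x * y \<in> S) \<and> (\<forall>x\<in>S. - x \<in> S)"

definition hom_on :: "'a::field set \<Rightarrow> ('a \<Rightarrow> 'a) \<Rightarrow> bool" where
  "hom_on R f \<longleftrightarrow> f 1 = 1 \<and> (\<forall>a\<in>R. \<forall>b\<in>R. f (a + b) = f a + f b \<and> f (a * b) = f a * f b)"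

lemma subfield_ring_closed: "subfield F \<Longrightarrow> ring_closed F"
  by (simp add: subfield_def ring_closed_def)

lemma subfieldD:
  assumes "subfield F"
  shows "0 \<in> F" "1 \<in> F" "x \<in> F \<Longrightarrow> y \<in> F \<Longrightarrow> x + y \<in> F"
    "x \<in> F \<Longrightarrow> y \<in> F \<Longrightarrow> x * y \<in> F" "x \<in> F \<Longrightarrow> - x \<in> F"
    "x \<in> F \<Longrightarrow> inverse x \<in> F"
    "x \<in> F \<Longrightarrow> y \<in> F \<Longrightarrow> x - y \<in> F"
    "x \<in> F \<Longrightarrow> y \<in> F \<Longrightarrow> x / y \<in> F"
proof -
  note A = assms[unfolded subfield_def]
  show I: "x \<in> F \<Longrightarrow> inverse x \<in> F" for x
    using A by (cases "x = 0") auto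
  show "0 \<in> F" "1 \<in> F" using A by auto
  show M: "x \<in> F \<Longrightarrow> y \<in> F \<Longrightarrow> x * y \<in> F" for x y using A by blast
  show P: "x \<in> F \<Longrightarrow> y \<in> F \<Longrightarrow> x + y \<in> F" for x y using A by blast
  show N: "x \<in> F \<Longrightarrow> - x \<in> F" for x using A by blast
  show "x \<in> F \<Longrightarrow> y \<in> F \<Longrightarrow> x - y \<in> F" using P[of x "- y"] N[of y] by (simp only: diff_conv_add_uminus)
  show "x \<in> F \<Longrightarrow> y \<in> F \<Longrightarrow> x / y \<in> F" using M[of x "inverse y"] I[of y] by (simp only: divide_inverse)
qed

lemma ring_closedD:
  assumes "ring_closed F"
  shows "0 \<in> F" "1 \<in> F" "x \<in> F \<Longrightarrow> y \<in> F \<Longrightarrow> x + y \<in> F"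
    "x \<in> F \<Longrightarrow> y \<in> F \<Longrightarrow> x * y \<in> F" "x \<in> F \<Longrightarrow> - x \<in> F"
    "x \<in> F \<Longrightarrow> y \<in> F \<Longrightarrow> x - y \<in> F"
proof -
  note A = assms[unfolded ring_closed_def]
  show "0 \<in> F" "1 \<in> F" using A by auto
  show P: "x \<in> F \<Longrightarrow> y \<in> F \<Longrightarrow> x + y \<in> F" for x y using A by blast
  show "x \<in> F \<Longrightarrow> y \<in> F \<Longrightarrow> x * y \<in> F" for x y using A by blast
  show N: "x \<in> F \<Longrightarrow> - x \<in> F" for x using A by blast
  show "x \<in> F \<Longrightarrow> y \<in> F \<Longrightarrow> x - y \<in> F" using P[of x "- y"] N[of y] by (simp only: diff_conv_add_uminus)
qed

lemma ring_closed_sum: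
  assumes "ring_closed F" "finite A" "\<And>i. i \<in> A \<Longrightarrow> f i \<in> F"
  shows "sum f A \<in> F"
  using assms(2,3)
proof (induction A rule: finite_induct)
  case empty
  then show ?case using ring_closedD(1)[OF assms(1)] by simp
next
  case (insert x A)
  then show ?case using ring_closedD(3)[OF assms(1)] by simp
qed

lemma poly_over_coeff:
  assumes "0 \<in> F"
  shows "poly_over F p \<longleftrightarrow> (\<forall>n. coeff p n \<in> F)"
proof
  assume pF: "poly_over F p"
  show "\<forall>n. coeff p n \<in> F"
  proof (intro allI)
    fix n
    show "coeff p n \<in> F"
    proof (cases "n \<le> degree p \<and> p \<noteq> 0")
      case True
      then have "coeff p n \<in> set (coeffs p)" by (intro coeff_in_coeffs) auto
      then show ?thesis using pF unfolding poly_over_def by blast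
    next
      case False
      then have "coeff p n = 0" by (auto simp: coeff_eq_0)
      then show ?thesis using assms by simp
    qed
  qed
next
  assume "\<forall>n. coeff p n \<in> F"
  then show "poly_over F p" unfolding poly_over_def coeffs_def
    by (clarsimp simp del: upt_Suc)
qed

lemma poly_over_mono: "poly_over S p \<Longrightarrow> S \<subseteq> T \<Longrightarrow> poly_over T p"
  by (auto simp: poly_over_def)

lemma poly_over_ops:
  assumes "ring_closed F" "poly_over F p" "poly_over F q"
  shows "poly_over F (p + q)" "poly_over F (p * q)" "poly_over F (- p)" "poly_over F (p - q)"
proof -
  have z: "0 \<in> F" using assms(1) by (rule ring_closedD)
  have cp: "\<And>n. coeff p n \<in> F" "\<And>n. coeff q n \<in> F" using assms(2,3) poly_over_coeff[OF z] by auto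
  show "poly_over F (p + q)" unfolding poly_over_coeff[OF z]
    using cp ring_closedD(3)[OF assms(1)] by simp
  show "poly_over F (- p)" unfolding poly_over_coeff[OF z]
    using cp ring_closedD(5)[OF assms(1)] by simp
  show "poly_over F (p - q)" unfolding poly_over_coeff[OF z]
    using cp ring_closedD(6)[OF assms(1)] by simp
  show "poly_over F (p * q)"
    unfolding poly_over_coeff[OF z] coeff_mult
  proof
    fix n show "(\<Sum>i\<le>n. coeff p i * coeff q (n - i)) \<in> F"
      by (rule ring_closed_sum[OF assms(1)]) (simp_all add: ring_closedD(4)[OF assms(1)] cp)
  qed
qed

lemma poly_over_const: "a \<in> F \<Longrightarrow> poly_over F [:a:]"
  by (auto simp: poly_over_def cCons_def split: if_splits)

lemma poly_over_X: "0 \<in> F \<Longrightarrow> 1 \<in> F \<Longrightarrow> poly_over F [:0, 1:]"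
  by (auto simp: poly_over_def)

lemma poly_over_pCons: "0 \<in> F \<Longrightarrow> poly_over F (pCons a p) \<longleftrightarrow> a \<in> F \<and> poly_over F p"
  by (auto simp: poly_over_coeff coeff_pCons split: nat.splits)

lemma poly_over_smult: "ring_closed F \<Longrightarrow> a \<in> F \<Longrightarrow> poly_over F p \<Longrightarrow> poly_over F (smult a p)"
  using ring_closedD(1,4)[of F] by (auto simp: poly_over_coeff)

lemma poly_over_monom: "0 \<in> F \<Longrightarrow> a \<in> F \<Longrightarrow> poly_over F (monom a n)"
  by (auto simp: poly_over_coeff coeff_monom)

lemma poly_eval_closed:
  assumes "ring_closed S" "poly_over S p" "a \<in> S"
  shows "poly p a \<in> S"
  using assms(2)
proof (induction p)
  case (pCons c p)
  have z: "0 \<in> S" using assms(1) by (rule ring_closedD)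
  from pCons.prems have "c \<in> S" "poly_over S p" using poly_over_pCons[OF z] by auto
  with pCons.IH show ?case using assms(1,3) by (auto intro!: ring_closedD)
qed (use assms(1) ring_closedD in auto)


lemma hom_onD:
  assumes "hom_on R f" "a \<in> R" "b \<in> R"
  shows "f (a + b) = f a + f b" "f (a * b) = f a * f b"
  using assms unfolding hom_on_def by blast+

lemma hom_on_basic:
  assumes "subfield R" "hom_on R f"
  shows "f 0 = 0" "f 1 = 1" "a \<in> R \<Longrightarrow> f (- a) = - f a"
    "a \<in> R \<Longrightarrow> b \<in> R \<Longrightarrow> f (a - b) = f a - f b"
    "a \<in> R \<Longrightarrow> f a = 0 \<Longrightarrow> a = 0"
    "a \<in> R \<Longrightarrow> f (inverse a) = inverse (f a)"
proof -
  have z: "0 \<in> R" using subfieldD(1)[OF assms(1)] .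
  have "f (0 + 0) = f 0 + f 0" using hom_onD(1)[OF assms(2) z z] .
  then have "f 0 = f 0 + f 0" by (simp only: add_0_left)
  then show f0: "f 0 = 0" by (metis add_cancel_right_right)
  show f1: "f 1 = 1" using assms(2) unfolding hom_on_def by blast
  show fn: "a \<in> R \<Longrightarrow> f (- a) = - f a" for a
  proof -
    assume a: "a \<in> R"
    have "f (a + - a) = f a + f (- a)" using hom_onD(1)[OF assms(2) a subfieldD(5)[OF assms(1) a]] .
    then have "f a + f (- a) = 0" using f0 by simp
    then have "- f a = f (- a)" by (simp only: neg_eq_iff_add_eq_0)
    then show ?thesis by (rule sym)
  qed
  show "a \<in> R \<Longrightarrow> b \<in> R \<Longrightarrow> f (a - b) = f a - f b"
  proof -
    assume ab: "a \<in> R" "b \<in> R"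
    have "f (a + - b) = f a + f (- b)"
      using hom_onD(1)[OF assms(2) ab(1) subfieldD(5)[OF assms(1) ab(2)]] .
    also have "\<dots> = f a + - f b" using fn[OF ab(2)] by (simp only:)
    finally show ?thesis by (simp only: diff_conv_add_uminus)
  qed
  have inv: "a \<in> R \<Longrightarrow> a \<noteq> 0 \<Longrightarrow> f a * f (inverse a) = 1" for a
    using hom_onD(2)[OF assms(2), of a "inverse a"] subfieldD(6)[OF assms(1), of a] f1 by simp
  show "a \<in> R \<Longrightarrow> f a = 0 \<Longrightarrow> a = 0" for a
    using inv[of a] by force
  show "a \<in> R \<Longrightarrow> f (inverse a) = inverse (f a)" for a
  proof -
    assume a: "a \<in> R"
    show ?thesis
    proof (cases "a = 0")
      case True then show ?thesis using f0 by simp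
    next
      case False
      then show ?thesis using inv[OF a False] by (simp add: inverse_unique)
    qed
  qed
qed

lemma hom_on_sum:
  assumes "subfield R" "hom_on R f" "finite A" "\<And>i. i \<in> A \<Longrightarrow> g i \<in> R"
  shows "f (sum g A) = (\<Sum>i\<in>A. f (g i))"
  using assms(3,4)
proof (induction A rule: finite_induct)
  case empty
  then show ?case using hom_on_basic(1)[OF assms(1,2)] by simp
next
  case (insert x A)
  have "sum g A \<in> R" using ring_closed_sum[OF subfield_ring_closed[OF assms(1)] insert(1)] insert(4) by blast
  then have "f (g x + sum g A) = f (g x) + f (sum g A)"
    using hom_onD(1)[OF assms(2)] insert(4) by blast
  then show ?case using insert by simp
qed

lemma map_poly_hom:
  assumes "subfield R" "hom_on R f" "poly_over R p" "poly_over R q"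
  shows "map_poly f (p + q) = map_poly f p + map_poly f q"
    "map_poly f (p * q) = map_poly f p * map_poly f q"
    "map_poly f (p - q) = map_poly f p - map_poly f q"
proof -
  have z: "0 \<in> R" using subfieldD(1)[OF assms(1)] .
  have f0: "f 0 = 0" using hom_on_basic(1)[OF assms(1,2)] .
  have cp: "\<And>n. coeff p n \<in> R" "\<And>n. coeff q n \<in> R" using assms(3,4) poly_over_coeff[OF z] by auto
  show "map_poly f (p + q) = map_poly f p + map_poly f q"
    by (rule poly_eqI) (simp add: coeff_map_poly f0 hom_onD(1)[OF assms(2) cp])
  show "map_poly f (p - q) = map_poly f p - map_poly f q"
    by (rule poly_eqI) (simp add: coeff_map_poly f0 hom_on_basic(4)[OF assms(1,2) cp])
  show "map_poly f (p * q) = map_poly f p * map_poly f q"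
  proof (rule poly_eqI)
    fix n
    have "f (\<Sum>i\<le>n. coeff p i * coeff q (n - i)) = (\<Sum>i\<le>n. f (coeff p i * coeff q (n - i)))"
      by (rule hom_on_sum[OF assms(1,2)]) (simp_all add: subfieldD(4)[OF assms(1) cp])
    also have "\<dots> = (\<Sum>i\<le>n. f (coeff p i) * f (coeff q (n - i)))"
      by (simp add: hom_onD(2)[OF assms(2) cp])
    finally show "coeff (map_poly f (p * q)) n = coeff (map_poly f p * map_poly f q) n"
      by (simp add: coeff_map_poly f0 coeff_mult)
  qed
qed

lemma map_poly_const_hom:
  assumes "subfield R" "hom_on R f"
  shows "map_poly f [:a:] = [:f a:]" "map_poly f [:0, 1:] = [:0, 1:]"
  using hom_on_basic(1,2)[OF assms] by (simp_all add: map_poly_pCons)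

lemma poly_map_poly_hom_UNIV:
  assumes "hom_on UNIV f"
  shows "f (poly p a) = poly (map_poly f p) (f a)"
proof -
  have sU: "subfield (UNIV :: 'a set)" by (simp add: subfield_def)
  have f0: "f 0 = 0" using hom_on_basic(1)[OF sU assms] .
  show ?thesis
  proof (induction p)
    case 0
    then show ?case using f0 by simp
  next
    case (pCons c p)
    then show ?case using hom_onD[OF assms] f0 by (simp add: map_poly_pCons)
  qed
qed

definition is_minpoly :: "'a::field set \<Rightarrow> 'a \<Rightarrow> 'a poly \<Rightarrow> bool" where
  "is_minpoly R z p \<longleftrightarrow> poly_over R p \<and> lead_coeff p = 1 \<and> poly p z = 0 \<and>
     (\<forall>q. poly_over R q \<and> q \<noteq> 0 \<and> poly q z = 0 \<longrightarrow> degree p \<le> degree q)"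

lemma minpoly_exists:
  assumes "subfield R" "algebraic_over R z"
  shows "\<exists>p. is_minpoly R z p"
proof -
  obtain p0 where "p0 \<noteq> 0 \<and> poly_over R p0 \<and> poly p0 z = 0"
    using assms(2) unfolding algebraic_over_def by blast
  then obtain p where p: "p \<noteq> 0 \<and> poly_over R p \<and> poly p z = 0"
    and min: "\<forall>q. q \<noteq> 0 \<and> poly_over R q \<and> poly q z = 0 \<longrightarrow> degree p \<le> degree q"
    using ex_has_least_nat[of "\<lambda>p. p \<noteq> 0 \<and> poly_over R p \<and> poly p z = 0" p0 degree] by blast
  define c where "c = inverse (lead_coeff p)"
  have lc: "lead_coeff p \<noteq> 0" using p by simp
  have cR: "c \<in> R"
  proof -
    have "lead_coeff p \<in> R" using p poly_over_coeff[OF subfieldD(1)[OF assms(1)]] by blast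
    then show ?thesis unfolding c_def by (rule subfieldD(6)[OF assms(1)])
  qed
  have "is_minpoly R z (smult c p)"
    unfolding is_minpoly_def
  proof (intro conjI allI impI)
    show "poly_over R (smult c p)"
      using poly_over_smult[OF subfield_ring_closed[OF assms(1)] cR] p by blast
    show "lead_coeff (smult c p) = 1" using lc by (simp add: c_def)
    show "poly (smult c p) z = 0" using p by simp
    fix q assume "poly_over R q \<and> q \<noteq> 0 \<and> poly q z = 0"
    then show "degree (smult c p) \<le> degree q" using min by simp
  qed
  then show ?thesis by blast
qed

lemma minpoly_nonzero: "is_minpoly R z p \<Longrightarrow> p \<noteq> 0"
  unfolding is_minpoly_def by auto

lemma minpoly_degree: "is_minpoly R z p \<Longrightarrow> degree p \<ge> 1"
proof (rule ccontr)
  assume a: "is_minpoly R z p" "\<not> degree p \<ge> 1"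
  then have "degree p = 0" by simp
  then have "p = [:lead_coeff p:]" using degree_0_id[of p] by simp
  then have "p = 1" using a(1) unfolding is_minpoly_def by (simp add: one_pCons)
  then show False using a(1) unfolding is_minpoly_def by simp
qed

lemma minpoly_dvd:
  assumes "subfield R" "is_minpoly R z p" "poly_over R q" "poly q z = 0"
  shows "\<exists>s. poly_over R s \<and> q = p * s"
  using assms(3,4)
proof (induction "degree q" arbitrary: q rule: less_induct)
  case less
  have rc: "ring_closed R" using subfield_ring_closed[OF assms(1)] .
  have z: "0 \<in> R" using subfieldD(1)[OF assms(1)] .
  have pR: "poly_over R p" and lp: "lead_coeff p = 1" and pz: "poly p z = 0"
    and min: "\<And>q. poly_over R q \<Longrightarrow> q \<noteq> 0 \<Longrightarrow> poly q z = 0 \<Longrightarrow> degree p \<le> degree q"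
    using assms(2) unfolding is_minpoly_def by blast+
  show ?case
  proof (cases "q = 0")
    case True
    then show ?thesis using z by (intro exI[of _ 0]) (simp add: poly_over_def)
  next
    case False
    have dq: "degree p \<le> degree q" using min[OF less.prems(1) False less.prems(2)] .
    define k where "k = degree q - degree p"
    define c where "c = lead_coeff q"
    have cR: "c \<in> R" using less.prems(1) poly_over_coeff[OF z] unfolding c_def by blast
    have c0: "c \<noteq> 0" using False unfolding c_def by simp
    define t where "t = monom c k * p"
    have p0: "p \<noteq> 0" using lp by auto
    have dt: "degree t = degree q" unfolding t_def k_def using c0 p0 dq
      by (simp add: degree_mult_eq degree_monom_eq)
    have lt: "lead_coeff t = c" unfolding t_def using lp by (simp add: lead_coeff_mult c0 degree_monom_eq)
    have tR: "poly_over R t" unfolding t_def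
      by (intro poly_over_ops(2)[OF rc] poly_over_monom[OF z cR] pR)
    define q' where "q' = q - t"
    have q'R: "poly_over R q'" unfolding q'_def by (rule poly_over_ops(4)[OF rc less.prems(1) tR])
    have q'z: "poly q' z = 0" unfolding q'_def t_def using less.prems(2) pz by simp
    have "\<exists>s'. poly_over R s' \<and> q' = p * s'"
    proof (cases "q' = 0")
      case True
      then show ?thesis using z by (intro exI[of _ 0]) (simp add: poly_over_def)
    next
      case False
      have "degree q' < degree q"
      proof -
        have "degree q' \<le> degree q" unfolding q'_def using dt
          by (intro degree_diff_le) simp_all
        moreover have "coeff q' (degree q) = 0" unfolding q'_def using dt lt c_def by simp
        ultimately show ?thesis using False
          by (metis le_neq_implies_less leading_coeff_0_iff)
      qed
      then show ?thesis using less.hyps q'R q'z by blast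
    qed
    then obtain s' where s': "poly_over R s'" "q' = p * s'" by blast
    have "q = p * (s' + monom c k)" using s'(2) unfolding q'_def t_def by (simp add: algebra_simps)
    moreover have "poly_over R (s' + monom c k)"
      by (intro poly_over_ops(1)[OF rc] s'(1) poly_over_monom[OF z cR])
    ultimately show ?thesis by blast
  qed
qed


definition ext_cond :: "'a::field set \<Rightarrow> ('a \<Rightarrow> 'a) \<Rightarrow> 'a \<Rightarrow> 'a \<Rightarrow> bool" where
  "ext_cond R f z w \<longleftrightarrow> (\<forall>g. poly_over R g \<longrightarrow> poly g z = 0 \<longrightarrow> poly (map_poly f g) w = 0)"

lemma poly_over_zero: "poly_over R 0"
  by (simp add: poly_over_def)

lemma ext_step:
  assumes sK: "subfield K" and sR: "subfield R" and KR: "K \<subseteq> R"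
    and alg: "\<And>a. algebraic_over K a" and hom: "hom_on R f"
    and cond: "ext_cond R f z w"
  shows "\<exists>R' f'. subfield R' \<and> R \<subseteq> R' \<and> z \<in> R' \<and> hom_on R' f' \<and> (\<forall>a\<in>R. f' a = f a) \<and> f' z = w"
proof -
  define R' where "R' = {poly g z | g. poly_over R g}"
  define ev where "ev g = poly (map_poly f g) w" for g
  define f' where "f' a = ev (SOME g. poly_over R g \<and> poly g z = a)" for a
  have rc: "ring_closed R" using subfield_ring_closed[OF sR] .
  have z0: "0 \<in> R" using subfieldD(1)[OF sR] .
  have key: "f' (poly g z) = ev g" if g: "poly_over R g" for g
  proof -
    define h where "h = (SOME h. poly_over R h \<and> poly h z = poly g z)"
    have h: "poly_over R h \<and> poly h z = poly g z"
      unfolding h_def by (rule someI[of _ g]) (simp add: g)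
    have "poly (g - h) z = 0" using h by simp
    moreover have "poly_over R (g - h)" using poly_over_ops(4)[OF rc g] h by blast
    ultimately have "poly (map_poly f (g - h)) w = 0" using cond unfolding ext_cond_def by blast
    then have "ev g - ev h = 0" unfolding ev_def using map_poly_hom(3)[OF sR hom g] h by simp
    then show ?thesis unfolding f'_def h_def by simp
  qed
  have inR': "poly g z \<in> R'" if "poly_over R g" for g using that unfolding R'_def by blast
  have RR': "R \<subseteq> R'"
  proof
    fix a assume "a \<in> R"
    then have "poly [:a:] z \<in> R'" by (intro inR' poly_over_const)
    then show "a \<in> R'" by simp
  qed
  have zR': "z \<in> R'"
  proof -
    have "poly [:0, 1:] z \<in> R'" by (intro inR' poly_over_X z0 subfieldD(2)[OF sR])
    then show ?thesis by simp
  qed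
  have rcR': "ring_closed R'"
    unfolding ring_closed_def
  proof (intro conjI ballI)
    show "0 \<in> R'" using RR' z0 by blast
    show "1 \<in> R'" using RR' subfieldD(2)[OF sR] by blast
    fix x y assume x: "x \<in> R'" and y: "y \<in> R'"
    obtain g where g: "poly_over R g" "x = poly g z" using x unfolding R'_def by blast
    obtain h where h: "poly_over R h" "y = poly h z" using y unfolding R'_def by blast
    show "x + y \<in> R'" using inR'[OF poly_over_ops(1)[OF rc g(1) h(1)]] g h by simp
    show "x * y \<in> R'" using inR'[OF poly_over_ops(2)[OF rc g(1) h(1)]] g h by simp
  next
    fix x assume x: "x \<in> R'"
    obtain g where g: "poly_over R g" "x = poly g z" using x unfolding R'_def by blast
    show "- x \<in> R'" using inR'[OF poly_over_ops(3)[OF rc g(1) g(1)]] g by simp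
  qed
  have sR': "subfield R'"
  proof -
    have inv: "inverse a \<in> R'" if a: "a \<in> R'" "a \<noteq> 0" for a
    proof -
      obtain p0 where "p0 \<noteq> 0 \<and> poly_over K p0 \<and> poly p0 a = 0"
        using alg[of a] unfolding algebraic_over_def by blast
      then obtain p where p: "p \<noteq> 0 \<and> poly_over K p \<and> poly p a = 0"
        and min: "\<forall>q. q \<noteq> 0 \<and> poly_over K q \<and> poly q a = 0 \<longrightarrow> degree p \<le> degree q"
        using ex_has_least_nat[of "\<lambda>p. p \<noteq> 0 \<and> poly_over K p \<and> poly p a = 0" p0 degree] by blast
      obtain c q where pc: "p = pCons c q" by (rule pCons_cases)
      have K0: "0 \<in> K" using subfieldD(1)[OF sK] .
      have cK: "c \<in> K" and qK: "poly_over K q" using p poly_over_pCons[OF K0] pc by blast+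
      have c0: "c \<noteq> 0"
      proof
        assume c: "c = 0"
        then have "a * poly q a = 0" using p pc by simp
        then have qa: "poly q a = 0" using a(2) by simp
        have q0: "q \<noteq> 0" using p pc c by auto
        then have "degree p = Suc (degree q)" using pc by simp
        moreover have "degree p \<le> degree q" using min q0 qK qa by blast
        ultimately show False by simp
      qed
      have eq: "c + a * poly q a = 0" using p pc by simp
      have "a * (- poly q a * inverse c) = 1"
      proof -
        have "a * poly q a = - c" using eq by (simp add: eq_neg_iff_add_eq_0 add.commute)
        then show ?thesis using c0 by (simp add: field_simps)
      qed
      then have ia: "inverse a = - poly q a * inverse c" by (rule inverse_unique)
      have "poly q a \<in> R'"
        by (rule poly_eval_closed[OF rcR' poly_over_mono[OF qK] a(1)]) (use KR RR' in blast)
      moreover have "inverse c \<in> R'" using subfieldD(6)[OF sK cK] KR RR' by blast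
      ultimately show ?thesis unfolding ia by (intro ring_closedD(4)[OF rcR'] ring_closedD(5)[OF rcR'])
    qed
    show ?thesis unfolding subfield_def using rcR' inv unfolding ring_closed_def by blast
  qed
  have f'R: "f' a = f a" if "a \<in> R" for a
  proof -
    have "f' (poly [:a:] z) = ev [:a:]" by (rule key) (rule poly_over_const[OF that])
    then show ?thesis unfolding ev_def using map_poly_const_hom(1)[OF sR hom] by simp
  qed
  have f'z: "f' z = w"
  proof -
    have "f' (poly [:0, 1:] z) = ev [:0, 1:]" by (rule key) (intro poly_over_X z0 subfieldD(2)[OF sR])
    then show ?thesis unfolding ev_def using map_poly_const_hom(2)[OF sR hom] by simp
  qed
  have homR': "hom_on R' f'"
    unfolding hom_on_def
  proof (intro conjI ballI)
    show "f' 1 = 1" using f'R[OF subfieldD(2)[OF sR]] hom unfolding hom_on_def by simp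
    fix x y assume x: "x \<in> R'" and y: "y \<in> R'"
    obtain g where g: "poly_over R g" "x = poly g z" using x unfolding R'_def by blast
    obtain h where h: "poly_over R h" "y = poly h z" using y unfolding R'_def by blast
    have "f' (x + y) = f' (poly (g + h) z)" using g h by simp
    also have "\<dots> = ev (g + h)" by (rule key[OF poly_over_ops(1)[OF rc g(1) h(1)]])
    also have "\<dots> = ev g + ev h" unfolding ev_def using map_poly_hom(1)[OF sR hom g(1) h(1)] by simp
    finally show "f' (x + y) = f' x + f' y" using key[OF g(1)] key[OF h(1)] g h by simp
    have "f' (x * y) = f' (poly (g * h) z)" using g h by simp
    also have "\<dots> = ev (g * h)" by (rule key[OF poly_over_ops(2)[OF rc g(1) h(1)]])
    also have "\<dots> = ev g * ev h" unfolding ev_def using map_poly_hom(2)[OF sR hom g(1) h(1)] by simp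
    finally show "f' (x * y) = f' x * f' y" using key[OF g(1)] key[OF h(1)] g h by simp
  qed
  show ?thesis using sR' RR' zR' homR' f'R f'z by blast
qed

lemma root_exists:
  fixes R :: "'a::field set"
  assumes sR: "subfield R" and hom: "hom_on R f"
    and closed: "\<And>p::'a poly. degree p \<ge> 1 \<Longrightarrow> \<exists>x. poly p x = 0"
    and alg: "algebraic_over R z"
  shows "\<exists>w. ext_cond R f z w"
proof -
  obtain p where p: "is_minpoly R z p" using minpoly_exists[OF sR alg] by blast
  have f0: "f 0 = 0" using hom_on_basic(1)[OF sR hom] .
  have "coeff (map_poly f p) (degree p) = 1"
    using p hom_on_basic(2)[OF sR hom] unfolding is_minpoly_def by (simp add: coeff_map_poly f0)
  then have "degree p \<le> degree (map_poly f p)" by (intro le_degree) simp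
  then have d1: "degree (map_poly f p) \<ge> 1" using minpoly_degree[OF p] by simp
  obtain w where w: "poly (map_poly f p) w = 0" using closed[OF d1] by blast
  have "ext_cond R f z w"
    unfolding ext_cond_def
  proof (intro allI impI)
    fix g assume g: "poly_over R g" "poly g z = 0"
    obtain s where s: "poly_over R s" "g = p * s" using minpoly_dvd[OF sR p g] by blast
    have pR: "poly_over R p" using p unfolding is_minpoly_def by blast
    show "poly (map_poly f g) w = 0" using map_poly_hom(2)[OF sR hom pR s(1)] s(2) w by simp
  qed
  then show ?thesis by blast
qed


definition good_graph :: "'a::field set \<Rightarrow> ('a \<Rightarrow> 'a) \<Rightarrow> ('a \<times> 'a) set \<Rightarrow> bool" where
  "good_graph R f G \<longleftrightarrow> (\<forall>a u v. (a, u) \<in> G \<longrightarrow> (a, v) \<in> G \<longrightarrow> u = v) \<and> subfield (Domain G) \<and>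
     (\<forall>a\<in>R. (a, f a) \<in> G) \<and>
     (\<forall>a u b v. (a, u) \<in> G \<longrightarrow> (b, v) \<in> G \<longrightarrow> (a + b, u + v) \<in> G \<and> (a * b, u * v) \<in> G)"

definition graph_of :: "'a set \<Rightarrow> ('a \<Rightarrow> 'a) \<Rightarrow> ('a \<times> 'a) set" where
  "graph_of S h = {(a, h a) | a. a \<in> S}"

lemma graph_of_iff: "(a, u) \<in> graph_of S h \<longleftrightarrow> a \<in> S \<and> u = h a"
  unfolding graph_of_def by blast

lemma good_graphD:
  assumes "good_graph R f G"
  shows "\<And>a u v. (a, u) \<in> G \<Longrightarrow> (a, v) \<in> G \<Longrightarrow> u = v" "subfield (Domain G)"
    "\<And>a. a \<in> R \<Longrightarrow> (a, f a) \<in> G"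
    "\<And>a u b v. (a, u) \<in> G \<Longrightarrow> (b, v) \<in> G \<Longrightarrow> (a + b, u + v) \<in> G"
    "\<And>a u b v. (a, u) \<in> G \<Longrightarrow> (b, v) \<in> G \<Longrightarrow> (a * b, u * v) \<in> G"
proof -
  note A = assms[unfolded good_graph_def]
  note A1 = conjunct1[OF A] and A2 = conjunct1[OF conjunct2[OF A]]
    and A3 = conjunct1[OF conjunct2[OF conjunct2[OF A]]] and A4 = conjunct2[OF conjunct2[OF conjunct2[OF A]]]
  show "\<And>a u v. (a, u) \<in> G \<Longrightarrow> (a, v) \<in> G \<Longrightarrow> u = v" using A1 by blast
  show "subfield (Domain G)" by (rule A2)
  show "\<And>a. a \<in> R \<Longrightarrow> (a, f a) \<in> G" using A3 by blast
  show "\<And>a u b v. (a, u) \<in> G \<Longrightarrow> (b, v) \<in> G \<Longrightarrow> (a + b, u + v) \<in> G" using A4 by blast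
  show "\<And>a u b v. (a, u) \<in> G \<Longrightarrow> (b, v) \<in> G \<Longrightarrow> (a * b, u * v) \<in> G" using A4 by blast
qed

lemma Domain_graph_of: "Domain (graph_of S h) = S"
  unfolding graph_of_def by auto

lemma good_graph_of:
  assumes "subfield S" "R \<subseteq> S" "hom_on S h" "\<forall>a\<in>R. h a = f a"
  shows "good_graph R f (graph_of S h)"
  unfolding good_graph_def Domain_graph_of
proof (intro conjI allI impI ballI)
  show "subfield S" by fact
  fix a u v assume "(a, u) \<in> graph_of S h" "(a, v) \<in> graph_of S h"
  then show "u = v" unfolding graph_of_def by auto
next
  fix a assume "a \<in> R" then show "(a, f a) \<in> graph_of S h"
    using assms(2,4) unfolding graph_of_def by auto
next
  fix a u b v assume au: "(a, u) \<in> graph_of S h" and bv: "(b, v) \<in> graph_of S h"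
  then have a: "a \<in> S" "u = h a" and b: "b \<in> S" "v = h b" unfolding graph_of_def by auto
  have "a + b \<in> S" "a * b \<in> S" using subfieldD(3,4)[OF assms(1) a(1) b(1)] by auto
  moreover have "h (a + b) = u + v" "h (a * b) = u * v" using hom_onD[OF assms(3) a(1) b(1)] a b by auto
  ultimately show "(a + b, u + v) \<in> graph_of S h" "(a * b, u * v) \<in> graph_of S h"
    unfolding graph_of_iff by simp_all
qed

lemma good_graph_fun:
  assumes "good_graph R f G" "hom_on R f" "subfield R"
  defines "h \<equiv> \<lambda>a. SOME u. (a, u) \<in> G"
  shows "hom_on (Domain G) h" "\<And>a u. (a, u) \<in> G \<Longrightarrow> h a = u" "\<And>a. a \<in> Domain G \<Longrightarrow> (a, h a) \<in> G"
proof -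
  have sv: "\<And>a u v. (a, u) \<in> G \<Longrightarrow> (a, v) \<in> G \<Longrightarrow> u = v" using good_graphD(1)[OF assms(1)] by blast
  have cl: "\<And>a u b v. (a, u) \<in> G \<Longrightarrow> (b, v) \<in> G \<Longrightarrow> (a + b, u + v) \<in> G \<and> (a * b, u * v) \<in> G"
    using good_graphD(4,5)[OF assms(1)] by blast
  show in1: "(a, h a) \<in> G" if "a \<in> Domain G" for a
    using that unfolding h_def by (auto intro: someI)
  show hu: "h a = u" if "(a, u) \<in> G" for a u
    using sv[OF in1 that] that by blast
  show "hom_on (Domain G) h"
    unfolding hom_on_def
  proof (intro conjI ballI)
    have "(1, f 1) \<in> G" using good_graphD(3)[OF assms(1) subfieldD(2)[OF assms(3)]] .
    moreover have "f 1 = 1" using assms(2) unfolding hom_on_def by blast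
    ultimately show "h 1 = 1" using hu by simp
    fix a b assume a: "a \<in> Domain G" and b: "b \<in> Domain G"
    show "h (a + b) = h a + h b" using hu cl[OF in1[OF a] in1[OF b]] by blast
    show "h (a * b) = h a * h b" using hu cl[OF in1[OF a] in1[OF b]] by blast
  qed
qed

lemma chain_common:
  assumes "C \<in> chains A" "X \<in> C" "Y \<in> C"
  shows "\<exists>Z\<in>C. X \<subseteq> Z \<and> Y \<subseteq> Z"
proof -
  have "chain\<^sub>\<subseteq> C" using assms(1) unfolding chains_def by simp
  then have "X \<subseteq> Y \<or> Y \<subseteq> X" using assms(2,3) unfolding chain_subset_def by blast
  then show ?thesis
  proof
    assume "X \<subseteq> Y" then show ?thesis using assms(3) by blast
  next
    assume "Y \<subseteq> X" then show ?thesis using assms(2) by blast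
  qed
qed

lemma extend_total:
  fixes K R :: "'a::field set"
  assumes sK: "subfield K" and sR: "subfield R" and KR: "K \<subseteq> R"
    and alg: "\<And>a. algebraic_over K a"
    and closed: "\<And>p::'a poly. degree p \<ge> 1 \<Longrightarrow> \<exists>x. poly p x = 0"
    and hom: "hom_on R f"
  shows "\<exists>g. hom_on UNIV g \<and> (\<forall>a\<in>R. g a = f a)"
proof -
  define A where "A = {G. good_graph R f G}"
  have G0: "graph_of R f \<in> A" unfolding A_def mem_Collect_eq by (rule good_graph_of[OF sR order_refl hom]) simp
  have "\<forall>C\<in>chains A. \<exists>U\<in>A. \<forall>X\<in>C. X \<subseteq> U"
  proof
    fix C assume C: "C \<in> chains A"
    show "\<exists>U\<in>A. \<forall>X\<in>C. X \<subseteq> U"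
    proof (cases "C = {}")
      case True
      then show ?thesis using G0 by blast
    next
      case False
      then obtain X0 where X0: "X0 \<in> C" by blast
      have CA: "\<And>X. X \<in> C \<Longrightarrow> good_graph R f X" using C unfolding chains_def A_def by blast
      have "good_graph R f (\<Union>C)"
        unfolding good_graph_def
      proof (intro conjI allI impI ballI)
        fix a u v assume "(a, u) \<in> \<Union>C" "(a, v) \<in> \<Union>C"
        then obtain X Y where "X \<in> C" "Y \<in> C" "(a, u) \<in> X" "(a, v) \<in> Y" by blast
        then obtain Z where "Z \<in> C" "(a, u) \<in> Z" "(a, v) \<in> Z" using chain_common[OF C] by blast
        then show "u = v" using good_graphD(1)[OF CA] by blast
      next
        fix a assume "a \<in> R"
        then show "(a, f a) \<in> \<Union>C" using good_graphD(3)[OF CA[OF X0]] X0 by blast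
      next
        fix a u b v assume "(a, u) \<in> \<Union>C" "(b, v) \<in> \<Union>C"
        then obtain X Y where "X \<in> C" "Y \<in> C" "(a, u) \<in> X" "(b, v) \<in> Y" by blast
        then obtain Z where Z: "Z \<in> C" "(a, u) \<in> Z" "(b, v) \<in> Z" using chain_common[OF C] by blast
        then have "(a + b, u + v) \<in> Z \<and> (a * b, u * v) \<in> Z" using good_graphD(4,5)[OF CA[OF Z(1)]] by blast
        then show "(a + b, u + v) \<in> \<Union>C" "(a * b, u * v) \<in> \<Union>C" using Z(1) by blast+
      next
        have sub: "\<And>X. X \<in> C \<Longrightarrow> subfield (Domain X)" using good_graphD(2)[OF CA] by blast
        have dom: "Domain (\<Union>C) = (\<Union>X\<in>C. Domain X)" by auto
        show "subfield (Domain (\<Union>C))"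
          unfolding subfield_def dom
        proof (intro conjI ballI impI)
          have UD: "\<And>X y. X \<in> C \<Longrightarrow> y \<in> Domain X \<Longrightarrow> y \<in> (\<Union>X\<in>C. Domain X)" by blast
          show "0 \<in> (\<Union>X\<in>C. Domain X)" by (rule UD[OF X0 subfieldD(1)[OF sub[OF X0]]])
          show "1 \<in> (\<Union>X\<in>C. Domain X)" by (rule UD[OF X0 subfieldD(2)[OF sub[OF X0]]])
          fix x assume "x \<in> (\<Union>X\<in>C. Domain X)"
          then obtain X where X: "X \<in> C" "x \<in> Domain X" by blast
          show "- x \<in> (\<Union>X\<in>C. Domain X)" by (rule UD[OF X(1) subfieldD(5)[OF sub[OF X(1)] X(2)]])
          show "inverse x \<in> (\<Union>X\<in>C. Domain X)" by (rule UD[OF X(1) subfieldD(6)[OF sub[OF X(1)] X(2)]])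
          fix y assume "y \<in> (\<Union>X\<in>C. Domain X)"
          then obtain Y where Y: "Y \<in> C" "y \<in> Domain Y" by blast
          obtain Z where Z: "Z \<in> C" "X \<subseteq> Z" "Y \<subseteq> Z" using chain_common[OF C X(1) Y(1)] by blast
          have xZ: "x \<in> Domain Z" using X(2) Z(2) by blast
          have yZ: "y \<in> Domain Z" using Y(2) Z(3) by blast
          show "x + y \<in> (\<Union>X\<in>C. Domain X)" by (rule UD[OF Z(1) subfieldD(3)[OF sub[OF Z(1)] xZ yZ]])
          show "x * y \<in> (\<Union>X\<in>C. Domain X)" by (rule UD[OF Z(1) subfieldD(4)[OF sub[OF Z(1)] xZ yZ]])
        qed
      qed
      then have "\<Union>C \<in> A" unfolding A_def by simp
      moreover have "\<forall>X\<in>C. X \<subseteq> \<Union>C" by blast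
      ultimately show ?thesis by blast
    qed
  qed
  then obtain M where MA: "M \<in> A" and max: "\<forall>X\<in>A. M \<subseteq> X \<longrightarrow> X = M"
    using Zorn_Lemma2[of A] by blast
  have gM: "good_graph R f M" using MA unfolding A_def by blast
  define h where "h = (\<lambda>a. SOME u. (a, u) \<in> M)"
  have homh: "hom_on (Domain M) h" and hu: "\<And>a u. (a, u) \<in> M \<Longrightarrow> h a = u"
    using good_graph_fun[OF gM hom sR] unfolding h_def by blast+
  have sD: "subfield (Domain M)" using good_graphD(2)[OF gM] .
  have RD: "R \<subseteq> Domain M" using good_graphD(3)[OF gM] by blast
  have hf: "\<forall>a\<in>R. h a = f a" using good_graphD(3)[OF gM] hu by blast
  have "Domain M = UNIV"
  proof (rule ccontr)
    assume "Domain M \<noteq> UNIV"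
    then obtain z where z: "z \<notin> Domain M" by blast
    have KD: "K \<subseteq> Domain M" using KR RD by (rule order_trans)
    obtain p where "p \<noteq> 0" "poly_over K p" "poly p z = 0" using alg[of z] unfolding algebraic_over_def by blast
    then have "algebraic_over (Domain M) z"
      unfolding algebraic_over_def using poly_over_mono[OF _ KD] by blast
    then obtain w where w: "ext_cond (Domain M) h z w" using root_exists[OF sD homh closed] by blast
    obtain R' f' where R': "subfield R'" "Domain M \<subseteq> R'" "z \<in> R'" "hom_on R' f'"
      "\<forall>a\<in>Domain M. f' a = h a"
      using ext_step[OF sK sD KD alg homh w] by blast
    have "graph_of R' f' \<in> A" unfolding A_def mem_Collect_eq
    proof (rule good_graph_of[OF R'(1) _ R'(4)])
      show "R \<subseteq> R'" using RD R'(2) by (rule order_trans)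
      show "\<forall>a\<in>R. f' a = f a"
      proof
        fix a assume a: "a \<in> R"
        then have "a \<in> Domain M" using RD by blast
        then have "f' a = h a" using R'(5) by blast
        then show "f' a = f a" using hf a by simp
      qed
    qed
    moreover have "M \<subseteq> graph_of R' f'"
    proof
      fix p assume p: "p \<in> M"
      obtain a u where au: "p = (a, u)" by (cases p)
      have "a \<in> Domain M" using p au by blast
      then have "a \<in> R'" "f' a = h a" using R'(2,5) by blast+
      moreover have "h a = u" using hu[of a u] p au by blast
      ultimately show "p \<in> graph_of R' f'" unfolding au graph_of_iff by simp
    qed
    ultimately have "graph_of R' f' = M" using max by blast
    then have "Domain M = R'" using Domain_graph_of[of R' f'] by simp
    then show False using z R'(3) by blast
  qed
  then have "hom_on UNIV h" using homh by simp
  then show ?thesis using hf by blast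
qed


lemma subfield_Inter:
  assumes "\<And>F. F \<in> S \<Longrightarrow> subfield F"
  shows "subfield (\<Inter>S)"
  unfolding subfield_def
proof (intro conjI ballI impI)
  show "0 \<in> \<Inter>S" using subfieldD(1)[OF assms] by blast
  show "1 \<in> \<Inter>S" using subfieldD(2)[OF assms] by blast
  fix x assume x: "x \<in> \<Inter>S"
  show "- x \<in> \<Inter>S"
  proof
    fix F assume F: "F \<in> S" show "- x \<in> F" using subfieldD(5)[OF assms[OF F]] x F by blast
  qed
  show "inverse x \<in> \<Inter>S"
  proof
    fix F assume F: "F \<in> S" show "inverse x \<in> F" using subfieldD(6)[OF assms[OF F]] x F by blast
  qed
  fix y assume y: "y \<in> \<Inter>S"
  show "x + y \<in> \<Inter>S"
  proof
    fix F assume F: "F \<in> S" show "x + y \<in> F" using subfieldD(3)[OF assms[OF F]] x y F by blast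
  qed
  show "x * y \<in> \<Inter>S"
  proof
    fix F assume F: "F \<in> S" show "x * y \<in> F" using subfieldD(4)[OF assms[OF F]] x y F by blast
  qed
qed

lemma compositum_props:
  shows "subfield (compositum K MM)" "K \<subseteq> compositum K MM" "\<Union>MM \<subseteq> compositum K MM"
    "\<And>F. subfield F \<Longrightarrow> K \<subseteq> F \<Longrightarrow> \<Union>MM \<subseteq> F \<Longrightarrow> compositum K MM \<subseteq> F"
proof -
  show "subfield (compositum K MM)" unfolding compositum_def
    by (rule subfield_Inter) blast
  show "K \<subseteq> compositum K MM" unfolding compositum_def by blast
  show "\<Union>MM \<subseteq> compositum K MM" unfolding compositum_def by blast
  show "\<And>F. subfield F \<Longrightarrow> K \<subseteq> F \<Longrightarrow> \<Union>MM \<subseteq> F \<Longrightarrow> compositum K MM \<subseteq> F"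
    unfolding compositum_def by blast
qed

lemma minpoly_irreducible:
  assumes "is_minpoly K x P"
  shows "irreducible_over K P"
  unfolding irreducible_over_def
proof (intro conjI allI impI)
  show "poly_over K P" using assms unfolding is_minpoly_def by blast
  show "1 \<le> degree P" using minpoly_degree[OF assms] .
  fix q s assume qs: "poly_over K q \<and> poly_over K s \<and> P = q * s"
  have P0: "P \<noteq> 0" using minpoly_nonzero[OF assms] .
  then have q0: "q \<noteq> 0" and s0: "s \<noteq> 0" using qs by auto
  have dP: "degree P = degree q + degree s" using qs q0 s0 by (simp add: degree_mult_eq)
  have min: "\<And>g. poly_over K g \<Longrightarrow> g \<noteq> 0 \<Longrightarrow> poly g x = 0 \<Longrightarrow> degree P \<le> degree g"
    using assms unfolding is_minpoly_def by blast
  have "poly q x * poly s x = 0" using qs assms unfolding is_minpoly_def by simp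
  then have "poly q x = 0 \<or> poly s x = 0" by simp
  then show "degree q = 0 \<or> degree s = 0"
  proof
    assume "poly q x = 0"
    then have "degree P \<le> degree q" using min qs q0 by blast
    then show ?thesis using dP by simp
  next
    assume "poly s x = 0"
    then have "degree P \<le> degree s" using min qs s0 by blast
    then show ?thesis using dP by simp
  qed
qed

lemma root_prod_linear:
  fixes a :: "'a::field"
  assumes "poly (\<Prod>r\<leftarrow>rs. [:- r, 1:]) a = 0"
  shows "a \<in> set rs"
  using assms
proof (induction rs)
  case Nil
  then show ?case by simp
next
  case (Cons r rs)
  have "poly [:- r, 1:] a * poly (\<Prod>r\<leftarrow>rs. [:- r, 1:]) a = 0" using Cons.prems
    by (simp only: prod_list.Cons list.map poly_mult)
  then have "poly [:- r, 1:] a = 0 \<or> poly (\<Prod>r\<leftarrow>rs. [:- r, 1:]) a = 0"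
    by (rule mult_eq_0_iff[THEN iffD1])
  moreover have "poly [:- r, 1:] a = a - r" by simp
  ultimately have "a - r = 0 \<or> poly (\<Prod>r\<leftarrow>rs. [:- r, 1:]) a = 0" by simp
  then show ?case using Cons.IH by auto
qed

lemma hom_UNIV_inj:
  assumes "hom_on UNIV f"
  shows "inj f"
proof (rule injI)
  have sU: "subfield (UNIV :: 'a set)" by (simp add: subfield_def)
  fix a b :: 'a assume "f a = f b"
  then have "f (a - b) = 0" using hom_on_basic(4)[OF sU assms] by simp
  then have "a - b = 0" using hom_on_basic(5)[OF sU assms] by blast
  then show "a = b" by simp
qed

lemma hom_root:
  assumes "hom_on UNIV f" "\<forall>k\<in>K. f k = k" "poly_over K P" "poly P z = 0"
  shows "poly P (f z) = 0"
proof -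
  have sU: "subfield (UNIV :: 'a set)" by (simp add: subfield_def)
  have "map_poly f P = P"
    by (rule map_poly_idI) (use assms(2,3) in \<open>auto simp: poly_over_def\<close>)
  then show ?thesis using poly_map_poly_hom_UNIV[OF assms(1), of P z] assms(4)
    hom_on_basic(1)[OF sU assms(1)] by simp
qed

lemma galois_stable:
  assumes cl: "algebraic_closure_of K" and hom: "hom_on UNIV f" and fixK: "\<forall>k\<in>K. f k = k"
    and gal: "galois_ext K N"
  shows "f ` N = N"
proof -
  have sK: "subfield K" using cl unfolding algebraic_closure_of_def by blast
  have alg: "\<And>a. algebraic_over K a" using cl unfolding algebraic_closure_of_def by blast
  have nor: "normal_ext K N" using gal unfolding galois_ext_def by blast
  have mp: "\<exists>P. is_minpoly K z P" for z using minpoly_exists[OF sK alg] .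
  have into: "f z \<in> N" if z: "z \<in> N" for z
  proof -
    obtain P where P: "is_minpoly K z P" using mp by blast
    have irr: "irreducible_over K P" using minpoly_irreducible[OF P] .
    have Pz: "poly P z = 0" and PK: "poly_over K P" using P unfolding is_minpoly_def by blast+
    have "splits_in N P" using nor z irr Pz unfolding normal_ext_def by blast
    then obtain c rs where rs: "set rs \<subseteq> N" "P = smult c (\<Prod>r\<leftarrow>rs. [:- r, 1:])"
      unfolding splits_in_def by blast
    have c0: "c \<noteq> 0" using minpoly_nonzero[OF P] rs(2) by auto
    have "poly P (f z) = 0" using hom_root[OF hom fixK PK Pz] .
    then have "poly (\<Prod>r\<leftarrow>rs. [:- r, 1:]) (f z) = 0" using rs(2) c0 by simp
    then show ?thesis using root_prod_linear rs(1) by blast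
  qed
  show ?thesis
  proof
    show "f ` N \<subseteq> N" using into by blast
    show "N \<subseteq> f ` N"
    proof
      fix z assume z: "z \<in> N"
      obtain P where P: "is_minpoly K z P" using mp by blast
      have Pz: "poly P z = 0" and PK: "poly_over K P" using P unfolding is_minpoly_def by blast+
      define S where "S = {r \<in> N. poly P r = 0}"
      have fin: "finite S" unfolding S_def using poly_roots_finite[OF minpoly_nonzero[OF P]] by simp
      have sub: "f ` S \<subseteq> S" unfolding S_def using into hom_root[OF hom fixK PK] by blast
      have "inj_on f S" using hom_UNIV_inj[OF hom] by (simp add: inj_on_def inj_def)
      then have "f ` S = S" using endo_inj_surj[OF fin sub] by blast
      moreover have "z \<in> S" unfolding S_def using z Pz by blast
      ultimately have "z \<in> f ` S" by simp
      then show "z \<in> f ` N" unfolding S_def by blast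
    qed
  qed
qed


lemma tau_exists:
  fixes K C N :: "'a::field set"
  assumes cl: "algebraic_closure_of K" and gal: "galois_ext K N"
    and sC: "subfield C" and KC: "K \<subseteq> C" and xN: "x \<in> N" and xC: "x \<notin> C"
  shows "\<exists>f. hom_on UNIV f \<and> (\<forall>c\<in>C. f c = c) \<and> f x \<noteq> x"
proof -
  have sK: "subfield K" using cl unfolding algebraic_closure_of_def by blast
  have alg: "\<And>a. algebraic_over K a" using cl unfolding algebraic_closure_of_def by blast
  have closed: "\<And>p::'a poly. degree p \<ge> 1 \<Longrightarrow> \<exists>x. poly p x = 0"
    using cl unfolding algebraic_closure_of_def by blast
  have sep: "separable_ext K N" using gal unfolding galois_ext_def by blast
  obtain P where P: "is_minpoly K x P" using minpoly_exists[OF sK alg] by blast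
  have PK: "poly_over K P" and Px: "poly P x = 0" using P unfolding is_minpoly_def by blast+
  have cop: "coprime P (pderiv P)"
    using sep xN minpoly_irreducible[OF P] Px unfolding separable_ext_def by blast
  have algC: "algebraic_over C x"
    using alg[of x] poly_over_mono[OF _ KC] unfolding algebraic_over_def by blast
  obtain p where p: "is_minpoly C x p" using minpoly_exists[OF sC algC] by blast
  have pC: "poly_over C p" and px: "poly p x = 0" and lp: "lead_coeff p = 1"
    using p unfolding is_minpoly_def by blast+
  obtain s where s: "P = p * s" using minpoly_dvd[OF sC p poly_over_mono[OF PK KC] Px] by blast
  define l where "l = [:- x, 1:]"
  have "l dvd p" using px unfolding l_def by (simp add: poly_eq_0_iff_dvd)
  then obtain h where h: "p = l * h" by (rule dvdE)
  have p0: "p \<noteq> 0" using minpoly_nonzero[OF p] .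
  have h0: "h \<noteq> 0" using p0 h by auto
  have dl: "degree l = 1" unfolding l_def by simp
  have dp: "degree p \<ge> 2"
  proof (rule ccontr)
    assume "\<not> degree p \<ge> 2"
    then have d1: "degree p = 1" using minpoly_degree[OF p] by simp
    have c1: "coeff p 1 = 1" using lp d1 by simp
    have "poly p x = (\<Sum>i\<le>degree p. coeff p i * x ^ i)" by (rule poly_altdef)
    also have "\<dots> = coeff p 0 + coeff p 1 * x" using d1 by simp
    finally have "coeff p 0 + x = 0" using c1 px by simp
    then have "- coeff p 0 = x" by (simp only: neg_eq_iff_add_eq_0)
    then have "x = - coeff p 0" by (rule sym)
    moreover have "coeff p 0 \<in> C" using pC poly_over_coeff[OF subfieldD(1)[OF sC]] by blast
    ultimately have "x \<in> C" using subfieldD(5)[OF sC] by simp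
    then show False using xC by simp
  qed
  have l0: "l \<noteq> 0" unfolding l_def by simp
  have "degree p = degree l + degree h" using h degree_mult_eq[OF l0 h0] by simp
  then have "degree h \<ge> 1" using dp dl by simp
  then obtain y where hy: "poly h y = 0" using closed by blast
  have yx: "y \<noteq> x"
  proof
    assume "y = x"
    then have "l dvd h" using hy unfolding l_def by (simp add: poly_eq_0_iff_dvd)
    then obtain t where "h = l * t" by (rule dvdE)
    then have Pt: "P = l * (l * (t * s))" using s h by (simp add: algebra_simps)
    have "pderiv P = l * (l * pderiv (t * s)) + (t * s) * (l * pderiv l + l * pderiv l)"
      unfolding Pt by (simp add: pderiv_mult algebra_simps)
    then have "l dvd pderiv P" by (simp add: algebra_simps)
    moreover have "l dvd P" using Pt by simp
    ultimately have "is_unit l" using coprime_common_divisor[OF cop] by blast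
    then show False using dl is_unit_iff_degree[of l] unfolding l_def by simp
  qed
  have py: "poly p y = 0" using h hy by simp
  have cond: "ext_cond C id x y"
    unfolding ext_cond_def
  proof (intro allI impI)
    fix g assume g: "poly_over C g" "poly g x = 0"
    obtain s' where "g = p * s'" using minpoly_dvd[OF sC p g] by blast
    then show "poly (map_poly id g) y = 0" using py by simp
  qed
  have homid: "hom_on C id" unfolding hom_on_def by simp
  obtain R' f' where R': "subfield R'" "C \<subseteq> R'" "x \<in> R'" "hom_on R' f'" "\<forall>a\<in>C. f' a = id a" "f' x = y"
    using ext_step[OF sK sC KC alg homid cond] by blast
  obtain g where g: "hom_on UNIV g" "\<forall>a\<in>R'. g a = f' a"
    using extend_total[OF sK R'(1) _ alg closed R'(4)] KC R'(2) by blast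
  have "\<forall>c\<in>C. g c = c" using g(2) R'(2,5) by auto
  moreover have "g x \<noteq> x" using g(2) R'(3,6) yx by simp
  ultimately show ?thesis using g(1) by blast
qed

lemma gal_of_hom:
  fixes K :: "'a::field set"
  assumes cl: "algebraic_closure_of K" and hom: "hom_on UNIV f" and fixK: "\<forall>k\<in>K. f k = k"
    and gal: "\<And>j. j \<in> J \<Longrightarrow> galois_ext K (M j)"
  shows "gal_aut K (compositum K (M ` J)) f"
proof -
  define L where "L = compositum K (M ` J)"
  have sU: "subfield (UNIV :: 'a set)" by (simp add: subfield_def)
  have sL: "subfield L" using compositum_props(1) unfolding L_def .
  have KL: "K \<subseteq> L" using compositum_props(2) unfolding L_def .
  have MsubL: "\<And>j. j \<in> J \<Longrightarrow> M j \<subseteq> L" using compositum_props(3) unfolding L_def by blast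
  have stab: "\<And>j. j \<in> J \<Longrightarrow> f ` M j = M j" using galois_stable[OF cl hom fixK gal] by blast
  have hb: "f 0 = 0" "f 1 = 1" "\<And>a. f (- a) = - f a" "\<And>a. f (inverse a) = inverse (f a)"
    using hom_on_basic[OF sU hom] by auto
  have ha: "\<And>a b. f (a + b) = f a + f b" "\<And>a b. f (a * b) = f a * f b"
    using hom unfolding hom_on_def by auto
  have sub1: "L \<subseteq> {a. f a \<in> L}"
  proof -
    have S1: "subfield {a. f a \<in> L}"
      unfolding subfield_def using subfieldD[OF sL] hb ha by simp
    have S2: "K \<subseteq> {a. f a \<in> L}" using fixK KL by auto
    have S3: "\<Union>(M ` J) \<subseteq> {a. f a \<in> L}" using stab MsubL by blast
    show ?thesis using compositum_props(4)[OF S1 S2 S3] unfolding L_def .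
  qed
  have sub2: "L \<subseteq> f ` L"
  proof -
    have S1: "subfield (f ` L)"
      unfolding subfield_def
    proof (intro conjI ballI impI)
      show "0 \<in> f ` L" using subfieldD(1)[OF sL] hb(1) by (metis image_eqI)
      show "1 \<in> f ` L" using subfieldD(2)[OF sL] hb(2) by (metis image_eqI)
      fix x assume "x \<in> f ` L"
      then obtain a where a: "a \<in> L" "x = f a" by blast
      show "- x \<in> f ` L" using a subfieldD(5)[OF sL a(1)] hb(3) by (metis image_eqI)
      show "inverse x \<in> f ` L" using a subfieldD(6)[OF sL a(1)] hb(4) by (metis image_eqI)
      fix y assume "y \<in> f ` L"
      then obtain b where b: "b \<in> L" "y = f b" by blast
      show "x + y \<in> f ` L" using a b subfieldD(3)[OF sL a(1) b(1)] ha(1) by (metis image_eqI)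
      show "x * y \<in> f ` L" using a b subfieldD(4)[OF sL a(1) b(1)] ha(2) by (metis image_eqI)
    qed
    have S2: "K \<subseteq> f ` L" using fixK KL by (metis image_eqI subsetI subsetD)
    have S3: "\<Union>(M ` J) \<subseteq> f ` L" using stab MsubL by blast
    show ?thesis using compositum_props(4)[OF S1 S2 S3] unfolding L_def .
  qed
  have "f ` L = L" using sub1 sub2 by blast
  moreover have "inj_on f L" using hom_UNIV_inj[OF hom] by (simp add: inj_on_def inj_def)
  ultimately have "bij_betw f L L" by (simp add: bij_betw_def)
  then show ?thesis unfolding gal_aut_def L_def[symmetric] using ha fixK by blast
qed


theorem lemma4p6:
  fixes K :: "'a::field set" and M :: "nat \<Rightarrow> 'a set" and r :: nat
  assumes "algebraic_closure_of K"
    and "\<And>i. i \<in> {1..r} \<Longrightarrow> galois_ext K (M i)"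
    and "\<And>i. i \<in> {1..r} \<Longrightarrow> \<not> M i \<subseteq> compositum K (M ` {1..<i})"
  shows "\<exists>\<sigma>. gal_aut K (compositum K (M ` {1..r})) \<sigma> \<and>
           (\<forall>i\<in>{1..r}. \<exists>x\<in>M i. \<sigma> x \<noteq> x)"
proof -
  note cl = assms(1) and gal = assms(2) and ncont = assms(3)
  define L where "L = compositum K (M ` {1..r})"
  have sK: "subfield K" using cl unfolding algebraic_closure_of_def by blast
  have "n \<le> r \<Longrightarrow> \<exists>\<sigma>. gal_aut K L \<sigma> \<and> (\<forall>i\<in>{1..n}. \<exists>x\<in>M i. \<sigma> x \<noteq> x)" for n
  proof (induction n)
    case 0
    have "gal_aut K L id" unfolding gal_aut_def by simp
    then show ?case by auto
  next
    case (Suc n)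
    then obtain \<sigma> where \<sigma>: "gal_aut K L \<sigma>" "\<forall>i\<in>{1..n}. \<exists>x\<in>M i. \<sigma> x \<noteq> x" by auto
    define i where "i = Suc n"
    have iJ: "i \<in> {1..r}" using Suc.prems unfolding i_def by simp
    show ?case
    proof (cases "\<exists>x\<in>M i. \<sigma> x \<noteq> x")
      case True
      then have "\<forall>j\<in>{1..Suc n}. \<exists>x\<in>M j. \<sigma> x \<noteq> x" using \<sigma>(2) unfolding i_def
        by (metis atLeastAtMostSuc_conv insert_iff le_add1 plus_1_eq_Suc)
      then show ?thesis using \<sigma>(1) by blast
    next
      case False
      then have \<sigma>fix: "\<And>x. x \<in> M i \<Longrightarrow> \<sigma> x = x" by blast
      define C where "C = compositum K (M ` {1..<i})"
      obtain y where y: "y \<in> M i" "y \<notin> C" using ncont[OF iJ] unfolding C_def by blast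
      have sC: "subfield C" "K \<subseteq> C" using compositum_props(1,2) unfolding C_def by blast+
      obtain \<psi> where \<psi>: "hom_on UNIV \<psi>" "\<forall>c\<in>C. \<psi> c = c" "\<psi> y \<noteq> y"
        using tau_exists[OF cl gal[OF iJ] sC y] by blast
      have fixK: "\<forall>k\<in>K. \<psi> k = k" using \<psi>(2) sC(2) by blast
      have g\<psi>: "gal_aut K L \<psi>" unfolding L_def by (rule gal_of_hom[OF cl \<psi>(1) fixK gal])
      have stab: "\<psi> ` M i = M i" using galois_stable[OF cl \<psi>(1) fixK gal[OF iJ]] .
      define \<tau> where "\<tau> = \<sigma> \<circ> \<psi>"
      have bij: "bij_betw \<tau> L L" unfolding \<tau>_def
        using g\<psi> \<sigma>(1) unfolding gal_aut_def by (metis bij_betw_trans)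
      have \<psi>L: "\<And>x. x \<in> L \<Longrightarrow> \<psi> x \<in> L" using g\<psi> unfolding gal_aut_def bij_betw_def by blast
      have ops: "\<forall>x\<in>L. \<forall>z\<in>L. \<tau> (x + z) = \<tau> x + \<tau> z \<and> \<tau> (x * z) = \<tau> x * \<tau> z"
      proof (intro ballI)
        fix x z assume x: "x \<in> L" and z: "z \<in> L"
        have "\<psi> (x + z) = \<psi> x + \<psi> z" "\<psi> (x * z) = \<psi> x * \<psi> z"
          using g\<psi> x z unfolding gal_aut_def by blast+
        moreover have "\<sigma> (\<psi> x + \<psi> z) = \<sigma> (\<psi> x) + \<sigma> (\<psi> z)" "\<sigma> (\<psi> x * \<psi> z) = \<sigma> (\<psi> x) * \<sigma> (\<psi> z)"
          using \<sigma>(1) \<psi>L[OF x] \<psi>L[OF z] unfolding gal_aut_def by blast+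
        ultimately show "\<tau> (x + z) = \<tau> x + \<tau> z \<and> \<tau> (x * z) = \<tau> x * \<tau> z"
          unfolding \<tau>_def by simp
      qed
      have kfix: "\<forall>k\<in>K. \<tau> k = k" using fixK \<sigma>(1) unfolding gal_aut_def \<tau>_def by simp
      have g\<tau>: "gal_aut K L \<tau>" unfolding gal_aut_def using bij ops kfix by blast
      have "\<forall>j\<in>{1..Suc n}. \<exists>x\<in>M j. \<tau> x \<noteq> x"
      proof
        fix j assume j: "j \<in> {1..Suc n}"
        show "\<exists>x\<in>M j. \<tau> x \<noteq> x"
        proof (cases "j = Suc n")
          case True
          have "\<psi> y \<in> M i" using stab y(1) by blast
          then have "\<tau> y = \<psi> y" unfolding \<tau>_def using \<sigma>fix by simp
          then have "\<tau> y \<noteq> y" using \<psi>(3) by simp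
          then show ?thesis using y(1) True unfolding i_def by blast
        next
          case False
          then have j1: "j \<in> {1..n}" using j by simp
          then obtain x where x: "x \<in> M j" "\<sigma> x \<noteq> x" using \<sigma>(2) by blast
          have "j \<in> {1..<i}" using j1 unfolding i_def by simp
          then have "M j \<subseteq> C" using compositum_props(3)[where K=K and MM="M ` {1..<i}"] unfolding C_def by blast
          then have "\<psi> x = x" using \<psi>(2) x(1) by blast
          then have "\<tau> x = \<sigma> x" unfolding \<tau>_def by simp
          then have "\<tau> x \<noteq> x" using x(2) by simp
          then show ?thesis using x(1) by blast
        qed
      qed
      then show ?thesis using g\<tau> by blast
    qed
  qed
  then show ?thesis unfolding L_def by blast
qed

end
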